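(* Let $d\geq 1$ and let $x_1,\dots,x_m\in\mathbb{R}^d$ be distinct vectors such that $\|x_i+x_j\|_2=1$ for all $i\neq j$, where $\|\cdot\|_2$ is the Euclidean norm. Then $m\leq d+1$ if $d\neq 2$, and $m\leq 4$ if $d=2$. Both bounds are attained: for each $d$ there exist such configurations with $m=d+1$ (if $d\neq 2$) and $m=4$ (if $d=2$). *)

theory Defs
  imports "HOL-Analysis.Analysis"
begin

end

theory Submission
  imports Defs
begin


lemma dep_indexed:
  fixes y :: "'i \<Rightarrow> 'a::euclidean_space"
  assumes "finite T" "inj_on y T" "DIM('a) < card T"
  shows "\<exists>\<mu>. (\<exists>i\<in>T. \<mu> i \<noteq> 0) \<and> (\<Sum>i\<in>T. \<mu> i *\<^sub>R y i) = 0"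
proof -
  have cS: "card (y ` T) = card T" using card_image[OF assms(2)] .
  have "dependent (y ` T)" by (rule dependent_biggerset) (use assms cS in simp)
  then have "\<exists>u. (\<exists>v\<in>y ` T. u v \<noteq> 0) \<and> (\<Sum>v\<in>y ` T. u v *\<^sub>R v) = 0"
    using dependent_finite[OF finite_imageI[OF assms(1)], of y] by (simp only:)
  then obtain u where u: "\<exists>v\<in>y ` T. u v \<noteq> 0" "(\<Sum>v\<in>y ` T. u v *\<^sub>R v) = 0"
    by blast
  have "(\<Sum>v\<in>y ` T. u v *\<^sub>R v) = (\<Sum>i\<in>T. u (y i) *\<^sub>R y i)"
    using sum.reindex[OF assms(2)] by simp
  then show ?thesis using u by (intro exI[of _ "\<lambda>i. u (y i)"]) auto
qed

lemma caseA:
  fixes x :: "nat \<Rightarrow> 'a::euclidean_space"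
  assumes inj: "inj_on x {..<m}"
    and pw: "\<forall>i<m. \<forall>j<m. i \<noteq> j \<longrightarrow> norm (x i + x j) = 1"
    and big: "\<forall>i<m. inner (x i) (x i) > 1/4"
  shows "m \<le> DIM('a) + 1"
proof (rule ccontr)
  assume "\<not> m \<le> DIM('a) + 1"
  hence lt: "DIM('a \<times> real) < card {..<m}" by (simp add: DIM_prod)
  define y where "y i = (x i, 1::real)" for i
  have "inj_on y {..<m}" using inj unfolding y_def inj_on_def by auto
  then obtain \<mu> where mu: "\<exists>i\<in>{..<m}. \<mu> i \<noteq> 0" "(\<Sum>i\<in>{..<m}. \<mu> i *\<^sub>R y i) = 0"
    using dep_indexed[of "{..<m}" y] lt by auto
  have s1: "(\<Sum>i<m. \<mu> i *\<^sub>R x i) = 0"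
    using arg_cong[OF mu(2), of fst] by (simp add: fst_sum y_def)
  have s2: "(\<Sum>i<m. \<mu> i) = 0"
    using arg_cong[OF mu(2), of snd] by (simp add: snd_sum y_def)
  define a where "a i = inner (x i) (x i)" for i
  define A where "A = (\<Sum>i<m. \<mu> i * a i)"
  have key: "\<mu> j * (4 * a j - 1) = A" if j: "j < m" for j
  proof -
    have c: "inner (x i + x j) (x i + x j) - 1 = (if i = j then 4 * a j - 1 else 0)" if "i < m" for i
    proof (cases "i = j")
      case True
      then show ?thesis by (simp add: a_def inner_add_left inner_add_right)
    next
      case False
      then have "norm (x i + x j) = 1" using pw that j by auto
      then have "inner (x i + x j) (x i + x j) = 1" by (simp add: norm_eq_1)
      then show ?thesis using False by simp
    qed
    have "(\<Sum>i<m. \<mu> i * (inner (x i + x j) (x i + x j) - 1)) = (\<Sum>i<m. \<mu> i * (if i = j then 4 * a j - 1 else 0))"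
      using c by (intro sum.cong) auto
    also have "\<dots> = (\<Sum>i<m. if i = j then \<mu> j * (4 * a j - 1) else 0)"
      by (intro sum.cong) auto
    also have "\<dots> = \<mu> j * (4 * a j - 1)"
      using j by simp
    finally have L: "(\<Sum>i<m. \<mu> i * (inner (x i + x j) (x i + x j) - 1)) = \<mu> j * (4 * a j - 1)" .
    have "(\<Sum>i<m. \<mu> i * (inner (x i + x j) (x i + x j) - 1))
        = (\<Sum>i<m. \<mu> i * a i + 2 * (\<mu> i * inner (x i) (x j)) + \<mu> i * (a j - 1))"
    proof (intro sum.cong refl)
      fix i
      have "inner (x i + x j) (x i + x j) = a i + 2 * inner (x i) (x j) + a j"
        by (simp add: a_def inner_add_left inner_add_right inner_commute[of "x j" "x i"])
      then show "\<mu> i * (inner (x i + x j) (x i + x j) - 1) = \<mu> i * a i + 2 * (\<mu> i * inner (x i) (x j)) + \<mu> i * (a j - 1)"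
        by (simp add: algebra_simps)
    qed
    also have "\<dots> = A + 2 * (\<Sum>i<m. \<mu> i * inner (x i) (x j)) + (\<Sum>i<m. \<mu> i) * (a j - 1)"
      unfolding A_def sum.distrib sum_distrib_left[symmetric] sum_distrib_right[symmetric] by simp
    also have "(\<Sum>i<m. \<mu> i * inner (x i) (x j)) = inner (\<Sum>i<m. \<mu> i *\<^sub>R x i) (x j)"
      by (simp add: inner_sum_left)
    finally show ?thesis using L s1 s2 by simp
  qed
  obtain i0 where i0: "i0 < m" "\<mu> i0 \<noteq> 0" using mu(1) by auto
  have "0 < (\<Sum>j<m. \<mu> j * (\<mu> j * (4 * a j - 1)))"
  proof (rule sum_pos2[of _ i0])
    show "0 < \<mu> i0 * (\<mu> i0 * (4 * a i0 - 1))"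
    proof -
      have "4 * a i0 - 1 > 0" using i0 big unfolding a_def by auto
      moreover have "\<mu> i0 * \<mu> i0 > 0" using i0(2)
        by (cases "\<mu> i0 > 0") (auto simp: mult_pos_pos mult_neg_neg)
      ultimately show ?thesis by (metis mult.assoc mult_pos_pos)
    qed
    show "0 \<le> \<mu> j * (\<mu> j * (4 * a j - 1))" if "j \<in> {..<m}" for j
    proof -
      have "4 * a j - 1 > 0" using that big unfolding a_def by auto
      then show ?thesis by (simp add: mult.assoc[symmetric])
    qed
  qed (use i0 in auto)
  also have "(\<Sum>j<m. \<mu> j * (\<mu> j * (4 * a j - 1))) = (\<Sum>j<m. \<mu> j * A)"
    using key by (intro sum.cong) auto
  also have "\<dots> = 0" using s2 by (simp add: sum_distrib_right[symmetric])
  finally show False by simp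
qed

lemma caseB:
  fixes x :: "nat \<Rightarrow> 'a::euclidean_space"
  assumes inj: "inj_on x {..<m}"
    and pw: "\<forall>i<m. \<forall>j<m. i \<noteq> j \<longrightarrow> norm (x i + x j) = 1"
    and i0: "i0 < m" and small: "inner (x i0) (x i0) \<le> 1/4"
    and T: "T \<subseteq> {..<m} - {i0}" and cT: "DIM('a) < card T"
  shows "card T = 3"
proof -
  have fT: "finite T" using finite_subset[OF T] by simp
  define w where "w = x i0"
  define a0 where "a0 = inner w w"
  define e where "e = 2 * a0 - 1/2"
  define z where "z i = x i - w" for i
  have N: "inner (x i) (x i) + 2 * inner (x i) (x j) + inner (x j) (x j) = 1"
    if "i < m" "j < m" "i \<noteq> j" for i j
  proof -
    have "norm (x i + x j) = 1" using pw that by auto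
    then have "inner (x i + x j) (x i + x j) = 1" by (simp add: norm_eq_1)
    then show ?thesis by (simp add: inner_add_left inner_add_right inner_commute[of "x j" "x i"])
  qed
  have Tm: "i < m" "i \<noteq> i0" if "i \<in> T" for i using T that by auto
  have zz: "inner (z i) (z j) = e" if "i \<in> T" "j \<in> T" "i \<noteq> j" for i j
  proof -
    have 1: "inner (x i) (x i) + 2 * inner (x i) (x j) + inner (x j) (x j) = 1"
      by (rule N) (use Tm that in auto)
    have 2: "inner (x i) (x i) + 2 * inner (x i) w + a0 = 1"
      unfolding w_def a0_def by (rule N) (use Tm that i0 in auto)
    have 3: "inner (x j) (x j) + 2 * inner (x j) w + a0 = 1"
      unfolding w_def a0_def by (rule N) (use Tm that i0 in auto)
    have "inner (z i) (z j) = inner (x i) (x j) - inner (x i) w - inner (x j) w + a0"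
      unfolding z_def a0_def by (simp add: inner_diff_left inner_diff_right inner_commute[of w "x j"])
    then show ?thesis using 1 2 3 unfolding e_def by linarith
  qed
  have zs: "inner (z i) (z i) = 1 - 4 * a0 - 4 * inner (z i) w" if "i \<in> T" for i
  proof -
    have 3: "inner (x i) (x i) + 2 * inner (x i) w + a0 = 1"
      unfolding w_def a0_def by (rule N) (use Tm that i0 in auto)
    have "inner (z i) (z i) = inner (x i) (x i) - 2 * inner (x i) w + a0"
      unfolding z_def a0_def by (simp add: inner_diff_left inner_diff_right inner_commute[of w "x i"])
    moreover have "inner (z i) w = inner (x i) w - a0"
      unfolding z_def a0_def by (simp add: inner_diff_left)
    ultimately show ?thesis using 3 by linarith
  qed
  have znz: "z i \<noteq> 0" if "i \<in> T" for i
  proof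
    assume "z i = 0"
    then have "x i = x i0" unfolding z_def w_def by simp
    then show False using inj Tm[OF that] i0 unfolding inj_on_def by auto
  qed
  have epos: "e \<le> 0" using small unfolding e_def a0_def w_def by simp
  define D where "D j = inner (z j) (z j) - e" for j
  have Dpos: "D j > 0" if "j \<in> T" for j
  proof -
    have "inner (z j) (z j) > 0" using znz[OF that] inner_gt_zero_iff by blast
    then show ?thesis using epos unfolding D_def by linarith
  qed
  have injz: "inj_on z T"
    using inj T unfolding inj_on_def z_def by auto
  obtain \<mu> where mu: "\<exists>i\<in>T. \<mu> i \<noteq> 0" "(\<Sum>i\<in>T. \<mu> i *\<^sub>R z i) = 0"
    using dep_indexed[OF fT injz cT] by blast
  define S where "S = (\<Sum>i\<in>T. \<mu> i)"
  have eq: "\<mu> j * D j + e * S = 0" if j: "j \<in> T" for j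
  proof -
    have "0 = inner (\<Sum>i\<in>T. \<mu> i *\<^sub>R z i) (z j)" using mu(2) by simp
    also have "\<dots> = (\<Sum>i\<in>T. \<mu> i * inner (z i) (z j))" by (simp add: inner_sum_left)
    also have "\<dots> = (\<Sum>i\<in>T. \<mu> i * e + (if i = j then \<mu> j * D j else 0))"
    proof (intro sum.cong refl)
      fix i assume "i \<in> T"
      then show "\<mu> i * inner (z i) (z j) = \<mu> i * e + (if i = j then \<mu> j * D j else 0)"
        using zz[of i j] j unfolding D_def by (auto simp: algebra_simps)
    qed
    also have "\<dots> = e * S + \<mu> j * D j"
      using j fT unfolding S_def sum.distrib sum_distrib_right[symmetric] by (simp add: mult.commute)
    finally show ?thesis by simp
  qed
  have eS: "e * S \<noteq> 0"
  proof
    assume "e * S = 0"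
    then have "\<mu> j * D j = 0" if "j \<in> T" for j using eq[OF that] by linarith
    then have "\<mu> j = 0" if "j \<in> T" for j using Dpos[OF that] that by (metis less_irrefl mult_eq_0_iff)
    then show False using mu(1) by auto
  qed
  have "(\<Sum>j\<in>T. \<mu> j * D j) = (\<Sum>j\<in>T. - (e * S))"
  proof (intro sum.cong refl)
    fix j assume "j \<in> T" then show "\<mu> j * D j = - (e * S)" using eq[of j] by linarith
  qed
  also have "\<dots> = - (e * S) * real (card T)" by simp
  finally have s1: "(\<Sum>j\<in>T. \<mu> j * D j) = - (e * S) * real (card T)" .
  have "(\<Sum>j\<in>T. \<mu> j * D j) = (\<Sum>j\<in>T. \<mu> j * (1 - 4 * a0 - e) - 4 * (\<mu> j * inner (z j) w))"
  proof (intro sum.cong refl)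
    fix j assume "j \<in> T"
    then have zj: "inner (z j) (z j) = 1 - 4 * a0 - 4 * inner (z j) w" by (rule zs)
    show "\<mu> j * D j = \<mu> j * (1 - 4 * a0 - e) - 4 * (\<mu> j * inner (z j) w)"
      unfolding D_def zj by (simp add: algebra_simps)
  qed
  also have "\<dots> = S * (1 - 4 * a0 - e) - 4 * (\<Sum>j\<in>T. \<mu> j * inner (z j) w)"
    unfolding S_def sum_subtractf sum_distrib_right[symmetric] sum_distrib_left[symmetric] ..
  also have "(\<Sum>j\<in>T. \<mu> j * inner (z j) w) = inner (\<Sum>j\<in>T. \<mu> j *\<^sub>R z j) w"
    by (simp add: inner_sum_left)
  also have "\<dots> = 0" using mu(2) by simp
  finally have s2: "(\<Sum>j\<in>T. \<mu> j * D j) = - 3 * (e * S)" unfolding e_def by (simp add: algebra_simps)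
  from s1 s2 have "(e * S) * real (card T) = (e * S) * 3" by simp
  then have "real (card T) = 3" using eS by simp
  then show ?thesis by simp
qed



lemma constr2:
  assumes "CARD('n) = 2"
  shows "\<exists>x::nat \<Rightarrow> real ^ 'n. inj_on x {..<4} \<and>
     (\<forall>i<4. \<forall>j<4. i \<noteq> j \<longrightarrow> norm (x i + x j) = 1)"
proof -
  obtain a b :: 'n where ab: "a \<noteq> b" "(UNIV :: 'n set) = {a, b}"
    using assms card_2_iff by metis
  define V :: "real \<Rightarrow> real \<Rightarrow> real ^ 'n" where "V p q = (\<chi> k. if k = a then p else q)" for p q
  have Va: "V p q $ a = p" and Vb: "V p q $ b = q" for p q using ab unfolding V_def by auto
  have Vadd: "V p q + V p' q' = V (p + p') (q + q')" for p q p' q'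
    unfolding V_def by (vector)
  have Vin: "inner (V p q) (V p q) = p * p + q * q" for p q
    unfolding inner_vec_def ab(2) using ab(1) Va Vb by simp
  have Vn: "norm (V p q) = 1 \<longleftrightarrow> p * p + q * q = 1" for p q
    using Vin norm_eq_1 by metis
  have Veq: "V p q = V p' q' \<longleftrightarrow> p = p' \<and> q = q'" for p q p' q'
    using Va Vb by metis
  define s :: real where "s = sqrt 3 / 2"
  have ss: "s * s = 3/4" unfolding s_def by (simp add: algebra_simps)
  have sp: "s > 0" unfolding s_def by simp
  define P :: "nat \<Rightarrow> real" where "P i = [0, 1, -1/2, -1/2] ! i" for i
  define Q :: "nat \<Rightarrow> real" where "Q i = [0, 0, s, -s] ! i" for i
  define x where "x i = V (P i) (Q i)" for i
  have L4: "{..<4::nat} = {0,1,2,3}" by auto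
  have "inj_on x {..<4}"
    unfolding inj_on_def L4 x_def Veq P_def Q_def using sp by auto
  moreover have "\<forall>i<4. \<forall>j<4. i \<noteq> j \<longrightarrow> norm (x i + x j) = 1"
  proof (intro allI impI)
    fix i j :: nat assume "i < 4" "j < 4" "i \<noteq> j"
    then have "i \<in> {0,1,2,3}" "j \<in> {0,1,2,3}" by auto
    then show "norm (x i + x j) = 1" using \<open>i \<noteq> j\<close>
      unfolding x_def Vadd Vn P_def Q_def using ss by (auto simp: algebra_simps)
  qed
  ultimately show ?thesis by blast
qed



lemma constrd:
  shows "\<exists>x::nat \<Rightarrow> real ^ 'n. inj_on x {..<CARD('n) + 1} \<and>
     (\<forall>i<CARD('n) + 1. \<forall>j<CARD('n) + 1. i \<noteq> j \<longrightarrow> norm (x i + x j) = 1)"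
proof -
  define d where "d = CARD('n)"
  have d1: "d \<ge> 1" unfolding d_def by (simp add: Suc_leI)
  obtain f :: "nat \<Rightarrow> 'n" where f: "bij_betw f {0..<d} UNIV"
    using ex_bij_betw_nat_finite[of "UNIV :: 'n set"] unfolding d_def by auto
  have finj: "f i = f j \<longleftrightarrow> i = j" if "i < d" "j < d" for i j
    using f that unfolding bij_betw_def inj_on_def by auto
  define one :: "real ^ 'n" where "one = (\<chi> k. 1)"
  define e :: "nat \<Rightarrow> real ^ 'n" where "e i = axis (f i) 1" for i
  have ee: "inner (e i) (e j) = (if f i = f j then 1 else 0)" for i j
    unfolding e_def by (simp add: inner_axis_axis)
  have eo: "inner (e i) one = 1" for i
    unfolding e_def one_def by (simp add: inner_axis')
  have oo: "inner one one = real d"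
    unfolding one_def inner_vec_def d_def by simp
  define t :: real where "t = sqrt 2"
  have tt: "t * t = 2" unfolding t_def by simp
  define r :: real where "r = sqrt (real d + 1)"
  have rr: "r * r = real d + 1" unfolding r_def by simp
  have r0: "r \<ge> 0" unfolding r_def by simp
  define \<alpha> where "\<alpha> = t / 2"
  define \<gamma> where "\<gamma> = t * (r - 1) / (2 * real d)"
  have a2: "\<alpha> * \<alpha> = 1/2" unfolding \<alpha>_def using tt by (simp add: field_simps)
  have ag: "\<alpha> * \<alpha> + 2 * \<alpha> * \<gamma> + real d * (\<gamma> * \<gamma>) = 1"
  proof -
    have dp: "real d > 0" using d1 by simp
    have "\<alpha> * \<alpha> + 2 * \<alpha> * \<gamma> + real d * (\<gamma> * \<gamma>)
        = (t * t) / 4 + (t * t) * (r - 1) / (2 * real d) + (t * t) * ((r - 1) * (r - 1)) / (4 * real d)"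
      unfolding \<alpha>_def \<gamma>_def using dp by (simp add: field_simps)
    also have "\<dots> = 1/2 + (2 * (r - 1) + (r * r - 2 * r + 1)) / (2 * real d)"
      using dp tt by (simp add: field_simps)
    also have "\<dots> = 1" unfolding rr using dp by (simp add: field_simps)
    finally show ?thesis .
  qed
  have tp: "t > 0" unfolding t_def by simp
  have ap: "\<alpha> \<noteq> 0" unfolding \<alpha>_def using tp by simp
  have agne: "\<alpha> \<noteq> \<gamma>"
  proof
    assume h: "\<alpha> = \<gamma>"
    have dp: "real d > 0" using d1 by simp
    have "t * real d = t * (r - 1)" using h tp dp unfolding \<alpha>_def \<gamma>_def by (simp add: field_simps)
    then have "r - 1 = real d" using tp by simp
    then have "r = real d + 1" by simp
    then have "(real d + 1) * (real d + 1) = real d + 1" using rr by simp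
    then have "real d + real d * real d = 0" by (simp add: algebra_simps)
    moreover have "real d * real d > 0" using dp by simp
    ultimately show False using dp by linarith
  qed
  define x where "x i = (if i < d then \<alpha> *\<^sub>R e i else \<gamma> *\<^sub>R one)" for i
  have comp: "x i $ f j = (if i < d then (if i = j then \<alpha> else 0) else \<gamma>)" if "j < d" "i < d + 1" for i j
    using that finj[of i j] unfolding x_def e_def one_def by (auto simp: axis_def)
  have "inj_on x {..<d + 1}"
  proof (rule inj_onI)
    fix i j assume i: "i \<in> {..<d+1}" and j: "j \<in> {..<d+1}" and h: "x i = x j"
    show "i = j"
    proof (rule ccontr)
      assume ne: "i \<noteq> j"
      show False
      proof (cases "i < d")
        case True
        have "x i $ f i = x j $ f i" using h by simp
        then show ?thesis using comp[of i i] comp[of i j] True i j ne ap agne by (auto split: if_splits)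
      next
        case False
        then have "j < d" using ne i j by auto
        have "x j $ f j = x i $ f j" using h by simp
        then show ?thesis using comp[of j j] comp[of j i] \<open>j < d\<close> i j ne ap agne by (auto split: if_splits)
      qed
    qed
  qed
  moreover have "\<forall>i<d + 1. \<forall>j<d + 1. i \<noteq> j \<longrightarrow> norm (x i + x j) = 1"
  proof (intro allI impI)
    fix i j assume i: "i < d + 1" and j: "j < d + 1" and ne: "i \<noteq> j"
    have key: "inner (x i + x j) (x i + x j) = 1"
    proof (cases "i < d \<and> j < d")
      case True
      then have "inner (x i + x j) (x i + x j) = \<alpha> * \<alpha> * (inner (e i) (e i) + 2 * inner (e i) (e j) + inner (e j) (e j))"
        unfolding x_def by (simp add: inner_add_left inner_add_right inner_commute[of "e j" "e i"] algebra_simps)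
      also have "\<dots> = 1" using True ne finj[of i j] a2 ee by simp
      finally show ?thesis .
    next
      case False
      then have "(i < d \<and> j = d) \<or> (j < d \<and> i = d)" using i j ne by auto
      then obtain k where k: "k < d" "x i + x j = \<alpha> *\<^sub>R e k + \<gamma> *\<^sub>R one"
        unfolding x_def by (auto simp: add.commute)
      have "inner (x i + x j) (x i + x j) = \<alpha> * \<alpha> * inner (e k) (e k) + 2 * \<alpha> * \<gamma> * inner (e k) one + \<gamma> * \<gamma> * inner one one"
        unfolding k(2) by (simp add: inner_add_left inner_add_right inner_commute[of one "e k"] algebra_simps)
      also have "\<dots> = 1" using ee eo oo ag by (simp add: algebra_simps)
      finally show ?thesis .
    qed
    then show "norm (x i + x j) = 1" by (simp add: norm_eq_1)
  qed
  ultimately show ?thesis unfolding d_def by blast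
qed


theorem theorem8:
  shows "(\<forall>(m::nat) (x::nat \<Rightarrow> real ^ 'n).
            inj_on x {..<m} \<and>
            (\<forall>i<m. \<forall>j<m. i \<noteq> j \<longrightarrow> norm (x i + x j) = 1)
            \<longrightarrow> m \<le> (if CARD('n) = 2 then 4 else CARD('n) + 1))
       \<and> (\<exists>x::nat \<Rightarrow> real ^ 'n.
            inj_on x {..<(if CARD('n) = 2 then 4 else CARD('n) + 1)} \<and>
            (\<forall>i<(if CARD('n) = 2 then 4 else CARD('n) + 1).
               \<forall>j<(if CARD('n) = 2 then 4 else CARD('n) + 1).
                 i \<noteq> j \<longrightarrow> norm (x i + x j) = 1))"
proof (intro conjI allI impI)
  fix m :: nat and x :: "nat \<Rightarrow> real ^ 'n"
  assume H: "inj_on x {..<m} \<and> (\<forall>i<m. \<forall>j<m. i \<noteq> j \<longrightarrow> norm (x i + x j) = 1)"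
  then have inj: "inj_on x {..<m}" and pw: "\<forall>i<m. \<forall>j<m. i \<noteq> j \<longrightarrow> norm (x i + x j) = 1"
    by auto
  have DIMn: "DIM(real ^ 'n) = CARD('n)" by simp
  show "m \<le> (if CARD('n) = 2 then 4 else CARD('n) + 1)"
  proof (cases "\<forall>i<m. inner (x i) (x i) > 1/4")
    case True
    from caseA[OF inj pw True] show ?thesis unfolding DIMn by auto
  next
    case False
    then obtain i0 where i0: "i0 < m" "inner (x i0) (x i0) \<le> 1/4" by (auto simp: not_less)
    have cR: "card ({..<m} - {i0}) = m - 1" using i0 by simp
    show ?thesis
    proof (rule ccontr)
      assume nb: "\<not> ?thesis"
      show False
      proof (cases "CARD('n) = 2")
        case True
        then have "4 \<le> card ({..<m} - {i0})" using nb cR by auto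
        then obtain T where T: "T \<subseteq> {..<m} - {i0}" "card T = 4" "finite T"
          by (rule obtain_subset_with_card_n)
        have "card T = 3" by (rule caseB[OF inj pw i0 T(1)]) (use T True DIMn in simp)
        then show False using T by simp
      next
        case False
        then have "CARD('n) + 1 \<le> card ({..<m} - {i0})" using nb cR by auto
        then obtain T where T: "T \<subseteq> {..<m} - {i0}" "card T = CARD('n) + 1" "finite T"
          by (rule obtain_subset_with_card_n)
        have "card T = 3" by (rule caseB[OF inj pw i0 T(1)]) (use T DIMn in simp)
        then show False using T False by simp
      qed
    qed
  qed
next
  show "\<exists>x::nat \<Rightarrow> real ^ 'n.
            inj_on x {..<(if CARD('n) = 2 then 4 else CARD('n) + 1)} \<and>
            (\<forall>i<(if CARD('n) = 2 then 4 else CARD('n) + 1).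
               \<forall>j<(if CARD('n) = 2 then 4 else CARD('n) + 1).
                 i \<noteq> j \<longrightarrow> norm (x i + x j) = 1)"
  proof (cases "CARD('n) = 2")
    case True
    then show ?thesis using constr2[OF True] by simp
  next
    case False
    then show ?thesis using constrd[where 'n='n] by simp
  qed
qed

end
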